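(* A ring $R$ has the $2$-nil-sum property if and only if either $R$ is a simple ring with the $2$-nil-sum property, or $R$ is a commutative local ring whose Jacobson radical is nil.
   Context: All rings are associative with identity. A central unit of $R$ is a unit of $R$ lying in the center of $R$; a non central-unit is an element that is not a central unit. A ring $R$ has the $2$-nil-sum property if every non central-unit of $R$ is a sum of two nilpotent elements of $R$. *)

theory Defs
  imports Main
begin

text \<open>All rings are associative with identity; we use the type class ring_1
  (which also forces 0 \<noteq> 1, i.e. the ring is nonzero).\<close>

definition is_unit_r :: "'a::ring_1 \<Rightarrow> bool" where
  "is_unit_r x \<longleftrightarrow> (\<exists>y. x * y = 1 \<and> y * x = 1)"

definition is_central :: "'a::ring_1 \<Rightarrow> bool" where
  "is_central x \<longleftrightarrow> (\<forall>y. x * y = y * x)"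

definition central_unit :: "'a::ring_1 \<Rightarrow> bool" where
  "central_unit x \<longleftrightarrow> is_unit_r x \<and> is_central x"

definition nilpotent_el :: "'a::ring_1 \<Rightarrow> bool" where
  "nilpotent_el x \<longleftrightarrow> (\<exists>n::nat. x ^ n = 0)"

definition two_nil_sum :: "'a::ring_1 itself \<Rightarrow> bool" where
  "two_nil_sum _ \<longleftrightarrow>
     (\<forall>x::'a. \<not> central_unit x \<longrightarrow>
        (\<exists>a b. nilpotent_el a \<and> nilpotent_el b \<and> x = a + b))"

definition add_subgroup :: "'a::ring_1 set \<Rightarrow> bool" where
  "add_subgroup I \<longleftrightarrow> 0 \<in> I \<and> (\<forall>a\<in>I. \<forall>b\<in>I. a + b \<in> I) \<and> (\<forall>a\<in>I. - a \<in> I)"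

definition left_ideal :: "'a::ring_1 set \<Rightarrow> bool" where
  "left_ideal I \<longleftrightarrow> add_subgroup I \<and> (\<forall>r. \<forall>a\<in>I. r * a \<in> I)"

definition two_sided_ideal :: "'a::ring_1 set \<Rightarrow> bool" where
  "two_sided_ideal I \<longleftrightarrow> add_subgroup I \<and> (\<forall>r. \<forall>a\<in>I. r * a \<in> I \<and> a * r \<in> I)"

definition simple_ring :: "'a::ring_1 itself \<Rightarrow> bool" where
  "simple_ring _ \<longleftrightarrow> (\<forall>I::'a set. two_sided_ideal I \<longrightarrow> I = {0} \<or> I = UNIV)"

definition maximal_left_ideal :: "'a::ring_1 set \<Rightarrow> bool" where
  "maximal_left_ideal M \<longleftrightarrow> left_ideal M \<and> M \<noteq> UNIV \<and>
     (\<forall>J. left_ideal J \<and> M \<subseteq> J \<longrightarrow> J = M \<or> J = UNIV)"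

definition jacobson :: "'a::ring_1 itself \<Rightarrow> 'a set" where
  "jacobson _ = \<Inter> {M. maximal_left_ideal M}"

definition local_ring :: "'a::ring_1 itself \<Rightarrow> bool" where
  "local_ring _ \<longleftrightarrow> (\<exists>!M::'a set. maximal_left_ideal M)"

definition commutative_ring :: "'a::ring_1 itself \<Rightarrow> bool" where
  "commutative_ring _ \<longleftrightarrow> (\<forall>x y::'a. x * y = y * x)"

definition nil_set :: "'a::ring_1 set \<Rightarrow> bool" where
  "nil_set I \<longleftrightarrow> (\<forall>x\<in>I. nilpotent_el x)"

end

theory Submission
  imports Defs
begin

lemma tsi_zero: "two_sided_ideal I \<Longrightarrow> 0 \<in> I"
  by (simp add: two_sided_ideal_def add_subgroup_def)
lemma tsi_add: "two_sided_ideal I \<Longrightarrow> a \<in> I \<Longrightarrow> b \<in> I \<Longrightarrow> a + b \<in> I"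
  by (simp add: two_sided_ideal_def add_subgroup_def)
lemma tsi_neg: "two_sided_ideal I \<Longrightarrow> a \<in> I \<Longrightarrow> - a \<in> I"
  by (simp add: two_sided_ideal_def add_subgroup_def)
lemma tsi_diff: "two_sided_ideal I \<Longrightarrow> a \<in> I \<Longrightarrow> b \<in> I \<Longrightarrow> a - b \<in> I"
  using tsi_add[of I a "- b"] tsi_neg[of I b] by simp
lemma tsi_lmul: "two_sided_ideal I \<Longrightarrow> a \<in> I \<Longrightarrow> r * a \<in> I"
  by (simp add: two_sided_ideal_def)
lemma tsi_rmul: "two_sided_ideal I \<Longrightarrow> a \<in> I \<Longrightarrow> a * r \<in> I"
  by (simp add: two_sided_ideal_def)
lemma tsi_one: "two_sided_ideal I \<Longrightarrow> 1 \<in> I \<Longrightarrow> I = UNIV"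
  using tsi_lmul[of I 1] by force

lemma geom:
  fixes x :: "'a::ring_1"
  shows "(1 - x) * (\<Sum>i<n. x^i) = 1 - x^n"
proof (induction n)
  case 0 then show ?case by simp
next
  case (Suc n)
  have "(1 - x) * (\<Sum>i<Suc n. x^i) = (1 - x) * (\<Sum>i<n. x^i) + (1 - x) * x^n"
    by (simp add: distrib_left)
  also have "\<dots> = 1 - x^Suc n" using Suc by (simp add: algebra_simps)
  finally show ?case .
qed

lemma nil_one_minus:
  fixes a :: "'a::ring_1"
  assumes "a ^ n = 0"
  shows "\<exists>w. (1 - a) * w = 1"
  using geom[of a n] assms by auto

lemma pow_rinv:
  fixes v :: "'a::ring_1"
  assumes "v * w = 1"
  shows "v ^ k * w ^ k = 1"
proof (induction k)
  case 0 then show ?case by simp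
next
  case (Suc k)
  have "v ^ Suc k * w ^ Suc k = v^k * (v * w) * w^k"
    unfolding power_Suc2[of v] power_Suc[of w] by (simp only: mult.assoc)
  also have "\<dots> = 1" using Suc assms by simp
  finally show ?case .
qed

lemma ideal_pow:
  fixes b :: "'a::ring_1"
  assumes I: "two_sided_ideal I" and j: "j \<in> I"
  shows "(b + j) ^ n - b ^ n \<in> I"
proof (induction n)
  case 0 then show ?case using tsi_zero[OF I] by simp
next
  case (Suc n)
  define e where "e = (b + j) ^ n - b ^ n"
  have "(b + j) ^ Suc n - b ^ Suc n = b^n * j + e * b + e * j"
    unfolding power_Suc2 by (simp add: e_def algebra_simps)
  moreover have "e \<in> I" using Suc e_def by simp
  ultimately show ?case
    using I j by (metis tsi_add tsi_lmul tsi_rmul)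
qed

lemma proper_ideal_central:
  fixes i :: "'a::ring_1"
  assumes T: "two_nil_sum TYPE('a)" and I: "two_sided_ideal I" and NU: "I \<noteq> UNIV"
    and iI: "i \<in> I"
  shows "is_central i"
proof (cases "central_unit (1 + i)")
  case True
  then have "\<forall>y. (1 + i) * y = y * (1 + i)" by (simp add: central_unit_def is_central_def)
  then show ?thesis by (simp add: is_central_def algebra_simps)
next
  case False
  then obtain a b where a: "nilpotent_el a" and b: "nilpotent_el b" and e: "1 + i = a + b"
    using T unfolding two_nil_sum_def by blast
  obtain n where bn: "b ^ n = 0" using b nilpotent_el_def by blast
  obtain k where ak: "a ^ k = 0" using a nilpotent_el_def by blast
  obtain w where w: "(1 - a) * w = 1" using nil_one_minus[OF ak] by blast
  have "1 - a = b + (- i)" using e by (simp add: algebra_simps)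
  then have "(1 - a) ^ n \<in> I" using ideal_pow[OF I tsi_neg[OF I iI], of b n] bn by simp
  then have "(1 - a) ^ n * w ^ n \<in> I" using tsi_rmul[OF I] by blast
  then have "1 \<in> I" using pow_rinv[OF w] by simp
  then show ?thesis using tsi_one[OF I] NU by blast
qed

section \<open>Step 2: arithmetic modulo an ideal containing all commutators\<close>

lemma reorder:
  fixes u :: "'a::ring_1"
  assumes A: "two_sided_ideal A" and C: "\<forall>x y::'a. x * y - y * x \<in> A"
  shows "(u * v) ^ n - u ^ n * v ^ n \<in> A"
proof (induction n)
  case 0 then show ?case using tsi_zero[OF A] by simp
next
  case (Suc n)
  define e where "e = (u * v) ^ n - u ^ n * v ^ n"
  define f where "f = v ^ n * u - u * v ^ n"
  have "(u * v) ^ Suc n - u ^ Suc n * v ^ Suc n = u^n * f * v + e * (u * v)"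
    unfolding power_Suc2 by (simp add: e_def f_def algebra_simps)
  moreover have "e \<in> A" using Suc e_def by simp
  moreover have "f \<in> A" using C f_def by simp
  ultimately show ?case using A by (metis tsi_add tsi_lmul tsi_rmul)
qed

lemma PU_false:
  fixes z :: "'a::ring_1"
  assumes A: "two_sided_ideal A" and C: "\<forall>x y::'a. x * y - y * x \<in> A" and N1: "1 \<notin> A"
    and P: "z ^ k \<in> A" and U: "z * s - 1 \<in> A"
  shows False
proof -
  have "(z * s) ^ k - z^k * s^k \<in> A" by (rule reorder[OF A C])
  moreover have "z^k * s^k \<in> A" using P A by (simp add: tsi_rmul)
  ultimately have "((z * s) ^ k - z^k * s^k) + z^k * s^k \<in> A" using A by (rule tsi_add[rotated])
  then have 1: "(z * s) ^ k \<in> A" by simp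
  have "(1 + (z * s - 1)) ^ k - 1 ^ k \<in> A" by (rule ideal_pow[OF A U])
  then have "(z * s) ^ k - 1 \<in> A" by simp
  then have "(z * s) ^ k - ((z * s) ^ k - 1) \<in> A" by (rule tsi_diff[OF A 1])
  then have "1 \<in> A" by simp
  then show False using N1 by simp
qed

lemma PU_add:
  fixes u :: "'a::ring_1"
  assumes A: "two_sided_ideal A" and C: "\<forall>x y::'a. x * y - y * x \<in> A"
    and U: "u * s - 1 \<in> A" and P: "n ^ k \<in> A"
  shows "\<exists>t. (u + n) * t - 1 \<in> A"
proof -
  define m where "m = n * s"
  have "(n * s) ^ k - n^k * s^k \<in> A" by (rule reorder[OF A C])
  moreover have "n^k * s^k \<in> A" using P A by (simp add: tsi_rmul)
  ultimately have "((n * s) ^ k - n^k * s^k) + n^k * s^k \<in> A" using A by (rule tsi_add[rotated])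
  then have mk: "m ^ k \<in> A" unfolding m_def by simp
  have mk2: "(- m) ^ k \<in> A" using mk A by (simp add: power_minus[of m] tsi_lmul)
  define g where "g = (\<Sum>i<k. (- m)^i)"
  have gg: "(1 - (- m)) * g = 1 - (- m) ^ k" unfolding g_def by (rule geom)
  have "(u + n) * (s * g) - 1 = (u * s - 1) * g + ((1 - (- m)) * g - 1)"
    by (simp add: m_def algebra_simps)
  also have "\<dots> = (u * s - 1) * g + (- ((- m) ^ k))" by (subst gg) simp
  finally have eq: "(u + n) * (s * g) - 1 = (u * s - 1) * g + (- ((- m) ^ k))" .
  moreover have "(u * s - 1) * g + (- ((- m) ^ k)) \<in> A"
    using tsi_add[OF A tsi_rmul[OF A U] tsi_neg[OF A mk2]] .
  ultimately have "(u + n) * (s * g) - 1 \<in> A" by (simp only:)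
  then show ?thesis by blast
qed

lemma noncentral_false:
  fixes x :: "'a::ring_1"
  assumes T: "two_nil_sum TYPE('a)"
    and A: "two_sided_ideal A" and C: "\<forall>x y::'a. x * y - y * x \<in> A" and N1: "1 \<notin> A"
    and nc: "\<not> is_central x"
  shows False
proof -
  have "\<not> central_unit x" using nc by (simp add: central_unit_def)
  then obtain a b where a: "nilpotent_el a" and b: "nilpotent_el b" and e1: "x = a + b"
    using T unfolding two_nil_sum_def by blast
  have "\<not> is_central (1 + x)" using nc by (simp add: is_central_def algebra_simps)
  then have "\<not> central_unit (1 + x)" by (simp add: central_unit_def)
  then obtain c d where c: "nilpotent_el c" and d: "nilpotent_el d" and e2: "1 + x = c + d"
    using T unfolding two_nil_sum_def by blast
  obtain ka where ka: "a ^ ka = 0" using a nilpotent_el_def by blast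
  obtain kb where kb: "b ^ kb = 0" using b nilpotent_el_def by blast
  obtain kc where kc: "c ^ kc = 0" using c nilpotent_el_def by blast
  obtain kd where kd: "d ^ kd = 0" using d nilpotent_el_def by blast
  have z: "0 \<in> A" using tsi_zero[OF A] .
  have U1: "(1::'a) * 1 - 1 \<in> A" using z by simp
  have "(- c) ^ kc \<in> A" using kc z by (simp add: power_minus[of a] power_minus[of b] power_minus[of c] power_minus[of m])
  from PU_add[OF A C U1 this] obtain t1 where t1: "(1 + - c) * t1 - 1 \<in> A" by blast
  have "a ^ ka \<in> A" using ka z by simp
  from PU_add[OF A C t1 this] obtain t2 where t2: "(1 + - c + a) * t2 - 1 \<in> A" by blast
  have "b ^ kb \<in> A" using kb z by simp
  from PU_add[OF A C t2 this] obtain t3 where t3: "(1 + - c + a + b) * t3 - 1 \<in> A" by blast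
  have "1 + - c + a + b = d" using e1 e2 by (simp add: algebra_simps)
  then have "d * t3 - 1 \<in> A" using t3 by simp
  moreover have "d ^ kd \<in> A" using kd z by simp
  ultimately show False using PU_false[OF A C N1] by blast
qed

lemma not_simple_comm:
  assumes T: "two_nil_sum TYPE('a::ring_1)" and NS: "\<not> simple_ring TYPE('a)"
  shows "commutative_ring TYPE('a)"
proof -
  obtain I :: "'a set" where I: "two_sided_ideal I" and I0: "I \<noteq> {0}" and IU: "I \<noteq> UNIV"
    using NS unfolding simple_ring_def by blast
  obtain i0 where i0: "i0 \<in> I" "i0 \<noteq> 0" using I0 tsi_zero[OF I] by blast
  have cen: "\<And>i y. i \<in> I \<Longrightarrow> i * y = y * i"
    using proper_ideal_central[OF T I IU] unfolding is_central_def by blast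
  define A where "A = {r::'a. \<forall>i\<in>I. r * i = 0}"
  have A: "two_sided_ideal A"
    unfolding two_sided_ideal_def add_subgroup_def
  proof (intro conjI ballI allI)
    show "0 \<in> A" unfolding A_def by simp
  next
    fix a b assume "a \<in> A" "b \<in> A"
    then show "a + b \<in> A" unfolding A_def by (simp add: distrib_right)
  next
    fix a assume "a \<in> A"
    then show "- a \<in> A" unfolding A_def by simp
  next
    fix r a assume "a \<in> A"
    then show "r * a \<in> A" unfolding A_def by (simp add: mult.assoc)
  next
    fix r a assume a: "a \<in> A"
    show "a * r \<in> A" unfolding A_def mem_Collect_eq
    proof (intro ballI)
      fix i assume "i \<in> I"
      then have "r * i \<in> I" by (rule tsi_lmul[OF I])
      then show "a * r * i = 0" using a unfolding A_def by (simp add: mult.assoc)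
    qed
  qed
  have C: "\<forall>x y::'a. x * y - y * x \<in> A"
  proof (intro allI)
    fix y z :: 'a
    have "(y * z - z * y) * i = 0" if "i \<in> I" for i
    proof -
      have zi: "z * i \<in> I" using tsi_lmul[OF I that] .
      have "y * z * i = y * (z * i)" by (simp add: mult.assoc)
      also have "\<dots> = z * i * y" using cen[OF zi] by simp
      also have "\<dots> = z * (i * y)" by (simp add: mult.assoc)
      also have "\<dots> = z * (y * i)" using cen[OF that] by simp
      finally show ?thesis by (simp add: algebra_simps)
    qed
    then show "y * z - z * y \<in> A" unfolding A_def by blast
  qed
  have N1: "1 \<notin> A" using i0 unfolding A_def by auto
  show ?thesis unfolding commutative_ring_def
  proof (rule ccontr)
    assume "\<not> (\<forall>x y::'a. x * y = y * x)"
    then obtain x :: 'a where "\<not> is_central x" unfolding is_central_def by blast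
    then show False using noncentral_false[OF T A C N1] by blast
  qed
qed

section \<open>Step 4: commutative rings\<close>

lemma comm_nil_aux:
  fixes a b :: "'a::ring_1"
  assumes comm: "\<And>x y::'a. x * y = y * x"
  shows "\<forall>i j. i + j = N \<longrightarrow> (\<exists>c d. (a + b) ^ N = a ^ i * c + b ^ j * d)"
proof (induction N)
  case 0
  show ?case
  proof (intro allI impI)
    fix i j :: nat assume "i + j = 0"
    then have "i = 0" "j = 0" by auto
    then show "\<exists>c d. (a + b) ^ 0 = a ^ i * c + b ^ j * d"
      by (intro exI[of _ 1] exI[of _ 0]) simp
  qed
next
  case (Suc N)
  show ?case
  proof (intro allI impI)
    fix i j assume ij: "i + j = Suc N"
    show "\<exists>c d. (a + b) ^ Suc N = a ^ i * c + b ^ j * d"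
    proof (cases i)
      case 0 then show ?thesis by (intro exI[of _ "(a+b)^Suc N"] exI[of _ 0]) simp
    next
      case (Suc i')
      show ?thesis
      proof (cases j)
        case 0 then show ?thesis by (intro exI[of _ 0] exI[of _ "(a+b)^Suc N"]) simp
      next
        case (Suc j')
        obtain c1 d1 where 1: "(a + b) ^ N = a ^ i' * c1 + b ^ j * d1"
          using Suc.IH ij \<open>i = Suc i'\<close> by (metis add_Suc Suc_inject)
        obtain c2 d2 where 2: "(a + b) ^ N = a ^ i * c2 + b ^ j' * d2"
          using Suc.IH ij \<open>j = Suc j'\<close> by (metis add_Suc_right Suc_inject)
        have ea: "a ^ i' * c1 * a = a ^ i * c1"
        proof -
          have "a ^ i' * c1 * a = a ^ i' * (a * c1)" by (simp add: mult.assoc comm[of c1 a])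
          also have "\<dots> = a ^ i * c1" unfolding \<open>i = Suc i'\<close> power_Suc2 by (simp only: mult.assoc)
          finally show ?thesis .
        qed
        have eb: "b ^ j' * d2 * b = b ^ j * d2"
        proof -
          have "b ^ j' * d2 * b = b ^ j' * (b * d2)" by (simp add: mult.assoc comm[of d2 b])
          also have "\<dots> = b ^ j * d2" unfolding \<open>j = Suc j'\<close> power_Suc2 by (simp only: mult.assoc)
          finally show ?thesis .
        qed
        have p1: "(a + b) ^ N * a = a ^ i' * c1 * a + b ^ j * (d1 * a)"
          by (subst 1) (simp add: distrib_right mult.assoc)
        have p2: "(a + b) ^ N * b = a ^ i * (c2 * b) + b ^ j' * d2 * b"
          by (subst 2) (simp add: distrib_right mult.assoc)
        have "(a + b) ^ Suc N = (a + b) ^ N * a + (a + b) ^ N * b"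
          unfolding power_Suc2 by (simp add: distrib_left)
        also have "\<dots> = (a ^ i' * c1 * a + b ^ j * (d1 * a)) + (a ^ i * (c2 * b) + b ^ j' * d2 * b)"
          using p1 p2 by (simp only:)
        also have "\<dots> = a ^ i * (c1 + c2 * b) + b ^ j * (d1 * a + d2)"
          using ea eb by (simp add: algebra_simps)
        finally show ?thesis by blast
      qed
    qed
  qed
qed

lemma comm_nil_sum:
  fixes a b :: "'a::ring_1"
  assumes comm: "\<And>x y::'a. x * y = y * x" and a: "nilpotent_el a" and b: "nilpotent_el b"
  shows "nilpotent_el (a + b)"
proof -
  obtain n where n: "a ^ n = 0" using a nilpotent_el_def by blast
  obtain m where m: "b ^ m = 0" using b nilpotent_el_def by blast
  obtain c d where "(a + b) ^ (n + m) = a ^ n * c + b ^ m * d"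
    using comm_nil_aux[OF comm, of "n + m" a b] by blast
  then show ?thesis using n m unfolding nilpotent_el_def by auto
qed

lemma comm_case:
  assumes T: "two_nil_sum TYPE('a::ring_1)" and CR: "commutative_ring TYPE('a)"
  shows "local_ring TYPE('a) \<and> nil_set (jacobson TYPE('a))"
proof -
  have comm: "\<And>x y::'a. x * y = y * x" using CR unfolding commutative_ring_def by blast
  have unit_iff: "is_unit_r x \<longleftrightarrow> (\<exists>y. x * y = 1)" for x :: 'a
    unfolding is_unit_r_def using comm by metis
  have cu_iff: "central_unit x \<longleftrightarrow> is_unit_r x" for x :: 'a
    unfolding central_unit_def is_central_def using comm by blast
  define M where "M = {x::'a. \<not> is_unit_r x}"
  have A0: "two_sided_ideal ({0}::'a set)"
    unfolding two_sided_ideal_def add_subgroup_def by simp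
  have C0: "\<forall>x y::'a. x * y - y * x \<in> {0}" using comm by simp
  have decomp: "\<And>x. x \<in> M \<Longrightarrow> \<exists>a b. nilpotent_el a \<and> nilpotent_el b \<and> x = a + b"
    using T cu_iff unfolding two_nil_sum_def M_def by blast
  have Madd: "x + y \<in> M" if x: "x \<in> M" and y: "y \<in> M" for x y
  proof (rule ccontr)
    assume "x + y \<notin> M"
    then obtain s where s: "(x + y) * s = 1" using unit_iff M_def by auto
    obtain a b where a: "nilpotent_el a" and b: "nilpotent_el b" and e: "x = a + b"
      using decomp[OF x] by blast
    obtain ka where ka: "a ^ ka = 0" using a nilpotent_el_def by blast
    obtain kb where kb: "b ^ kb = 0" using b nilpotent_el_def by blast
    have U: "(x + y) * s - 1 \<in> {0}" using s by simp
    have "(- a) ^ ka \<in> {0}" using ka by (simp add: power_minus[of a] power_minus[of b] power_minus[of c] power_minus[of m])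
    then obtain t1 where t1: "(x + y + - a) * t1 - 1 \<in> {0}" using PU_add[OF A0 C0 U] by blast
    have "(- b) ^ kb \<in> {0}" using kb by (simp add: power_minus[of a] power_minus[of b] power_minus[of c] power_minus[of m])
    then obtain t2 where t2: "(x + y + - a + - b) * t2 - 1 \<in> {0}" using PU_add[OF A0 C0 t1] by blast
    have eq: "x + y + - a + - b = y" using e by (simp add: algebra_simps)
    have "y * t2 - 1 \<in> {0}" using t2 by (simp only: eq)
    then have "y * t2 = 1" by simp
    then show False using y unit_iff M_def by auto
  qed
  have Mneg: "- x \<in> M" if "x \<in> M" for x
  proof -
    have "\<not> (\<exists>s. (- x) * s = 1)"
    proof
      assume "\<exists>s. (- x) * s = 1"
      then obtain s where "(- x) * s = 1" by blast
      then have "x * (- s) = 1" by simp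
      then have "is_unit_r x" using unit_iff by blast
      then show False using that M_def by simp
    qed
    then show ?thesis using unit_iff M_def by auto
  qed
  have Mmul: "r * x \<in> M" if "x \<in> M" for r x
  proof -
    have "\<not> (\<exists>s. (r * x) * s = 1)"
    proof
      assume "\<exists>s. (r * x) * s = 1"
      then obtain s where "(r * x) * s = 1" by blast
      then have "x * (r * s) = 1" by (metis comm mult.assoc)
      then show False using that unit_iff M_def by auto
    qed
    then show ?thesis using unit_iff M_def by auto
  qed
  have M0: "0 \<in> M" using unit_iff M_def by auto
  have Mli: "left_ideal M"
    unfolding left_ideal_def add_subgroup_def using M0 Madd Mneg Mmul by blast
  have M1: "1 \<notin> M" using unit_iff M_def by auto
  have li_one: "J = UNIV" if "left_ideal J" "1 \<in> J" for J :: "'a set"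
    using that unfolding left_ideal_def by (metis UNIV_eq_I mult.right_neutral)
  have li_unit: "J = UNIV" if LJ: "left_ideal J" and uJ: "u \<in> J" and uU: "is_unit_r u" for J :: "'a set" and u
  proof -
    obtain v where "v * u = 1" using uU unfolding is_unit_r_def by blast
    then have "1 \<in> J" using LJ uJ unfolding left_ideal_def by metis
    then show ?thesis using li_one LJ by blast
  qed
  have Mmax: "maximal_left_ideal M"
    unfolding maximal_left_ideal_def
  proof (intro conjI allI impI)
    show "left_ideal M" by (rule Mli)
    show "M \<noteq> UNIV" using M1 by blast
    fix J assume h: "left_ideal J \<and> M \<subseteq> J"
    show "J = M \<or> J = UNIV"
    proof (cases "J \<subseteq> M")
      case True then show ?thesis using h by blast
    next
      case False
      then obtain u where "u \<in> J" "u \<notin> M" by blast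
      then show ?thesis using li_unit h M_def by blast
    qed
  qed
  have uniq: "N = M" if "maximal_left_ideal N" for N
  proof -
    have NU: "N \<noteq> UNIV" and Nl: "left_ideal N" using that unfolding maximal_left_ideal_def by auto
    have "N \<subseteq> M"
    proof
      fix u assume "u \<in> N"
      then show "u \<in> M" using li_unit[OF Nl] NU M_def by blast
    qed
    then have "M = N \<or> M = UNIV" using that Mli unfolding maximal_left_ideal_def by blast
    then show ?thesis using M1 by blast
  qed
  have loc: "local_ring TYPE('a)" unfolding local_ring_def using Mmax uniq by blast
  have jac: "jacobson TYPE('a) = M"
  proof -
    have "{N. maximal_left_ideal N} = {M}" using Mmax uniq by blast
    then show ?thesis unfolding jacobson_def by simp
  qed
  have nil: "nil_set M"
    unfolding nil_set_def
  proof
    fix x assume "x \<in> M"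
    then obtain a b where "nilpotent_el a" "nilpotent_el b" "x = a + b" using decomp by blast
    then show "nilpotent_el x" using comm_nil_sum[OF comm] by blast
  qed
  show ?thesis using loc jac nil by simp
qed

lemma local_nil_tns:
  assumes CR: "commutative_ring TYPE('a::ring_1)" and L: "local_ring TYPE('a)"
    and N: "nil_set (jacobson TYPE('a))"
  shows "two_nil_sum TYPE('a)"
proof -
  have comm: "\<And>x y::'a. x * y = y * x" using CR unfolding commutative_ring_def by blast
  obtain M :: "'a set" where Mm: "maximal_left_ideal M" and uq: "\<And>N. maximal_left_ideal N \<Longrightarrow> N = M"
    using L unfolding local_ring_def by blast
  have "{N. maximal_left_ideal N} = {M}" using Mm uq by blast
  then have jac: "jacobson TYPE('a) = M" unfolding jacobson_def by simp
  have Mnil: "\<And>m. m \<in> M \<Longrightarrow> nilpotent_el m" using N jac unfolding nil_set_def by blast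
  have Ml: "left_ideal M" using Mm unfolding maximal_left_ideal_def by blast
  show ?thesis unfolding two_nil_sum_def
  proof (intro allI impI)
    fix x :: 'a assume ncu: "\<not> central_unit x"
    have xM: "x \<in> M"
    proof (rule ccontr)
      assume xn: "x \<notin> M"
      define K where "K = {m + r * x | m r. m \<in> M}"
      have Kmem: "m + r * x \<in> K" if "m \<in> M" for m r unfolding K_def using that by blast
      have M0: "0 \<in> M" using Ml unfolding left_ideal_def add_subgroup_def by blast
      have Kl: "left_ideal K"
        unfolding left_ideal_def add_subgroup_def
      proof (intro conjI ballI allI)
        show "0 \<in> K" using Kmem[OF M0, of 0] by simp
      next
        fix a b assume "a \<in> K" "b \<in> K"
        then obtain m1 r1 m2 r2 where h: "a = m1 + r1 * x" "m1 \<in> M" "b = m2 + r2 * x" "m2 \<in> M"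
          unfolding K_def by blast
        have "m1 + m2 \<in> M" using h Ml unfolding left_ideal_def add_subgroup_def by blast
        moreover have "a + b = (m1 + m2) + (r1 + r2) * x" using h by (simp add: algebra_simps)
        ultimately show "a + b \<in> K" by (metis Kmem)
      next
        fix a assume "a \<in> K"
        then obtain m1 r1 where h: "a = m1 + r1 * x" "m1 \<in> M" unfolding K_def by blast
        have "- m1 \<in> M" using h Ml unfolding left_ideal_def add_subgroup_def by blast
        moreover have "- a = (- m1) + (- r1) * x" using h by (simp add: algebra_simps)
        ultimately show "- a \<in> K" by (metis Kmem)
      next
        fix s a assume "a \<in> K"
        then obtain m1 r1 where h: "a = m1 + r1 * x" "m1 \<in> M" unfolding K_def by blast
        have "s * m1 \<in> M" using h Ml unfolding left_ideal_def by blast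
        moreover have "s * a = (s * m1) + (s * r1) * x" using h by (simp add: algebra_simps)
        ultimately show "s * a \<in> K" by (metis Kmem)
      qed
      have MK: "M \<subseteq> K" using Kmem[of _ 0] by auto
      have "x \<in> K" using Kmem[OF M0, of 1] by simp
      then have "K \<noteq> M" using xn by blast
      then have "K = UNIV" using Mm Kl MK unfolding maximal_left_ideal_def by blast
      then obtain m r where e: "1 = m + r * x" and mM: "m \<in> M" unfolding K_def by blast
      obtain k where "m ^ k = 0" using Mnil[OF mM] nilpotent_el_def by blast
      then obtain w where w: "(1 - m) * w = 1" using nil_one_minus by blast
      have "r * x = 1 - m" using e by (simp add: algebra_simps)
      then have "r * x * w = 1" using w by simp
      then have xi: "x * (r * w) = 1" by (metis comm mult.assoc)
      then have "(r * w) * x = 1" using comm by metis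
      then have "is_unit_r x" using xi unfolding is_unit_r_def by blast
      moreover have "is_central x" unfolding is_central_def using comm by blast
      ultimately show False using ncu unfolding central_unit_def by blast
    qed
    have "nilpotent_el (0::'a)" unfolding nilpotent_el_def by (auto intro!: exI[of _ 1])
    then show "\<exists>a b. nilpotent_el a \<and> nilpotent_el b \<and> x = a + b"
      using Mnil[OF xM] by (intro exI[of _ x] exI[of _ 0]) simp
  qed
qed

theorem theorem2p2:
  shows "two_nil_sum TYPE('a::ring_1) \<longleftrightarrow>
    ((simple_ring TYPE('a) \<and> two_nil_sum TYPE('a)) \<or>
     (commutative_ring TYPE('a) \<and> local_ring TYPE('a) \<and> nil_set (jacobson TYPE('a))))"
  using not_simple_comm comm_case local_nil_tns by blast

end
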